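(* Consider a finite set $\mathcal{U}$ of users with traffic demands $T_u>0$ and attenuations $\ell_u>0$, constants $g,N_0,\Gamma>0$, $c\in(0,1)$, and $T_{tot}=\sum_{u}T_u$. For $W>0$ let $\mathit{EE}_{opt}(W)$ be the maximum of $\mathit{EE}=\frac{cT_{tot}}{\sum_u p_u}$ over allocations $w_u>0$ with $\sum_u w_u=W$ and $p_u=\frac{gN_0\Gamma}{\ell_u}(2^{T_u/w_u}-1)w_u$. Then the optimal energy efficiency admits the explicit upper bound, attained as $W\to\infty$ (low SNR regime), $$\mathit{EE}^*=\frac{cT_{tot}}{gN_0\Gamma\ln 2\sum_{u\in\mathcal{U}}\frac{T_u}{\ell_u}},$$ i.e. $\mathit{EE}_{opt}(W)\le\mathit{EE}^*$ for all $W$ and $\mathit{EE}_{opt}(W)\to\mathit{EE}^*$ as $W\to\infty$.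
   Context: Model: downlink OFDMA single cell with Rayleigh fading; $p_u$ is the minimum transmit power ensuring $\mathbb{P}(C_u\ge T_u)=c$, with $C_u=w_u\log_2(1+\mathit{SNR}_u/\Gamma)$, $\mathit{SNR}_u=p_uh_f\ell_u/(w_uN_0)$, $h_f$ exponential with mean $1/\tau$, $g=\tau/\ln(1/c)$. *)

theory Defs
  imports Complex_Main
begin

definition power :: "real \<Rightarrow> real \<Rightarrow> real \<Rightarrow> real \<Rightarrow> real \<Rightarrow> real \<Rightarrow> real" where
  "power g N0 \<Gamma> l T w = g * N0 * \<Gamma> / l * (2 powr (T / w) - 1) * w"

definition EE :: "'a set \<Rightarrow> ('a \<Rightarrow> real) \<Rightarrow> ('a \<Rightarrow> real) \<Rightarrow> real \<Rightarrow> real \<Rightarrow> real \<Rightarrow> real \<Rightarrow> ('a \<Rightarrow> real) \<Rightarrow> real" where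
  "EE U T l g N0 \<Gamma> c w = c * (\<Sum>u\<in>U. T u) / (\<Sum>u\<in>U. power g N0 \<Gamma> (l u) (T u) (w u))"

definition allocations :: "'a set \<Rightarrow> real \<Rightarrow> ('a \<Rightarrow> real) set" where
  "allocations U W = {w. (\<forall>u\<in>U. w u > 0) \<and> (\<Sum>u\<in>U. w u) = W}"

definition EE_opt :: "'a set \<Rightarrow> ('a \<Rightarrow> real) \<Rightarrow> ('a \<Rightarrow> real) \<Rightarrow> real \<Rightarrow> real \<Rightarrow> real \<Rightarrow> real \<Rightarrow> real \<Rightarrow> real" where
  "EE_opt U T l g N0 \<Gamma> c W = (SUP w\<in>allocations U W. EE U T l g N0 \<Gamma> c w)"

end

theory Submission
  imports Defs
begin

lemma lim1: "((\<lambda>x. (2 powr (a/x) - 1)*x) \<longlongrightarrow> a * ln 2) at_top" for a :: real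
proof -
  have d: "((\<lambda>t. 2 powr (a*t)) has_field_derivative (2 powr (a*0) * ln 2 * a)) (at 0)"
    by (auto intro!: derivative_eq_intros)
  have "((\<lambda>h. (2 powr (a*(0+h)) - 2 powr (a*0)) / h) \<longlongrightarrow> 2 powr (a*0) * ln 2 * a) (at 0)"
    using d unfolding DERIV_def by simp
  hence "((\<lambda>h. (2 powr (a*h) - 1) / h) \<longlongrightarrow> a * ln 2) (at 0)"
    by (simp add: mult.commute)
  hence g: "((\<lambda>h. (2 powr (a*h) - 1) / h) \<longlongrightarrow> a * ln 2) (at_right 0)"
    by (simp add: filterlim_at_split)
  have "((\<lambda>x. (2 powr (a*(inverse x)) - 1) / inverse x) \<longlongrightarrow> a * ln 2) at_top"
    by (rule filterlim_compose[OF g filterlim_inverse_at_right_top])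
  then show ?thesis
    by (rule filterlim_cong[THEN iffD1, rotated 3]) (auto simp: divide_inverse)
qed

lemma key: "T > 0 \<Longrightarrow> w > (0::real) \<Longrightarrow> T * ln 2 \<le> (2 powr (T/w) - 1)*w"
proof -
  assume h: "T > 0" "w > 0"
  have "1 + T/w*ln 2 \<le> exp (T/w*ln 2)" by (rule exp_ge_add_one_self)
  also have "\<dots> = 2 powr (T/w)" by (simp add: powr_def)
  finally have "T/w*ln 2 \<le> 2 powr (T/w) - 1" by simp
  hence "T/w*ln 2 * w \<le> (2 powr (T/w) - 1) * w" using h by (intro mult_right_mono) auto
  thus ?thesis using h by simp
qed

theorem lemma2:
  fixes U :: "'a set" and T l :: "'a \<Rightarrow> real" and g N0 \<Gamma> c :: real
  assumes "finite U" and "U \<noteq> {}"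
    and "\<forall>u\<in>U. T u > 0" and "\<forall>u\<in>U. l u > 0"
    and "g > 0" and "N0 > 0" and "\<Gamma> > 0" and "0 < c" and "c < 1"
  defines "EEstar \<equiv> c * (\<Sum>u\<in>U. T u) / (g * N0 * \<Gamma> * ln 2 * (\<Sum>u\<in>U. T u / l u))"
  shows "(\<forall>W>0. EE_opt U T l g N0 \<Gamma> c W \<le> EEstar)
       \<and> ((\<lambda>W. EE_opt U T l g N0 \<Gamma> c W) \<longlongrightarrow> EEstar) at_top"
proof -
  define K where "K = g * N0 * \<Gamma>"
  have K: "K > 0" using assms unfolding K_def by simp
  define S where "S = (\<Sum>u\<in>U. T u / l u)"
  have S: "S > 0" unfolding S_def using assms by (intro sum_pos) auto
  have Tt: "(\<Sum>u\<in>U. T u) > 0" using assms by (intro sum_pos) auto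
  have D: "K * ln 2 * S > 0" using K S by simp
  have EEs: "EEstar = c * (\<Sum>u\<in>U. T u) / (K * ln 2 * S)"
    unfolding EEstar_def K_def S_def by simp
  have pw: "K / l u * (T u * ln 2) \<le> power g N0 \<Gamma> (l u) (T u) (w u)"
    if "u \<in> U" "w u > 0" for u w
  proof -
    have "K / l u * (T u * ln 2) \<le> K / l u * ((2 powr (T u/w u) - 1)*w u)"
      using that assms K by (intro mult_left_mono key) auto
    thus ?thesis unfolding power_def K_def by (simp add: mult.assoc)
  qed
  have bnd: "EE U T l g N0 \<Gamma> c w \<le> EEstar" if "w \<in> allocations U W" for w W
  proof -
    have "(\<Sum>u\<in>U. K / l u * (T u * ln 2)) \<le> (\<Sum>u\<in>U. power g N0 \<Gamma> (l u) (T u) (w u))"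
      using that by (intro sum_mono pw) (auto simp: allocations_def)
    moreover have "(\<Sum>u\<in>U. K / l u * (T u * ln 2)) = K * ln 2 * S"
      unfolding S_def sum_distrib_left by (intro sum.cong) auto
    ultimately have "K * ln 2 * S \<le> (\<Sum>u\<in>U. power g N0 \<Gamma> (l u) (T u) (w u))" by simp
    hence "c * (\<Sum>u\<in>U. T u) / (\<Sum>u\<in>U. power g N0 \<Gamma> (l u) (T u) (w u))
           \<le> c * (\<Sum>u\<in>U. T u) / (K * ln 2 * S)"
      using D Tt assms by (intro divide_left_mono) auto
    thus ?thesis unfolding EE_def EEs .
  qed
  define n where "n = real (card U)"
  have n: "n > 0" using assms unfolding n_def by (simp add: card_gt_0_iff)
  define un where "un = (\<lambda>W::real. \<lambda>u::'a. W / n)"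
  have unA: "un W \<in> allocations U W" if "W > 0" for W
    using that n assms unfolding allocations_def un_def n_def by auto
  have bdd: "bdd_above ((EE U T l g N0 \<Gamma> c) ` allocations U W)" for W
    using bnd by (intro bdd_aboveI2) blast
  have up: "EE_opt U T l g N0 \<Gamma> c W \<le> EEstar" if "W > 0" for W
    unfolding EE_opt_def using unA[OF that] bnd by (intro cSUP_least) auto
  have low: "EE U T l g N0 \<Gamma> c (un W) \<le> EE_opt U T l g N0 \<Gamma> c W" if "W > 0" for W
    unfolding EE_opt_def using unA[OF that] bdd by (intro cSUP_upper) auto
  have limu: "((\<lambda>W. power g N0 \<Gamma> (l u) (T u) (un W u)) \<longlongrightarrow> K / l u * (T u * ln 2)) at_top"
    if "u \<in> U" for u
  proof -
    have "((\<lambda>W. (2 powr (T u * n / W) - 1) * W) \<longlongrightarrow> T u * n * ln 2) at_top"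
      by (rule lim1)
    hence A: "((\<lambda>W. K / l u * (((2 powr (T u * n / W) - 1) * W) / n)) \<longlongrightarrow> K / l u * ((T u * n * ln 2) / n)) at_top"
      using n by (intro tendsto_mult_left tendsto_divide tendsto_const) auto
    moreover have e1: "K / l u * ((T u * n * ln 2) / n) = K / l u * (T u * ln 2)" using n by simp
    moreover have e2: "(\<lambda>W. K / l u * (((2 powr (T u * n / W) - 1) * W) / n)) = (\<lambda>W. power g N0 \<Gamma> (l u) (T u) (un W u))"
      unfolding power_def un_def K_def by (rule ext) simp
    show ?thesis using A unfolding e1 e2 .
  qed
  have "((\<lambda>W. \<Sum>u\<in>U. power g N0 \<Gamma> (l u) (T u) (un W u)) \<longlongrightarrow> (\<Sum>u\<in>U. K / l u * (T u * ln 2))) at_top"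
    by (intro tendsto_sum limu)
  moreover have "(\<Sum>u\<in>U. K / l u * (T u * ln 2)) = K * ln 2 * S"
    unfolding S_def sum_distrib_left by (intro sum.cong) auto
  ultimately have "((\<lambda>W. \<Sum>u\<in>U. power g N0 \<Gamma> (l u) (T u) (un W u)) \<longlongrightarrow> K * ln 2 * S) at_top"
    by simp
  hence "((\<lambda>W. c * (\<Sum>u\<in>U. T u) / (\<Sum>u\<in>U. power g N0 \<Gamma> (l u) (T u) (un W u))) \<longlongrightarrow> c * (\<Sum>u\<in>U. T u) / (K * ln 2 * S)) at_top"
    using D by (intro tendsto_intros) auto
  hence lim: "((\<lambda>W. EE U T l g N0 \<Gamma> c (un W)) \<longlongrightarrow> EEstar) at_top"
    unfolding EE_def EEs .
  have "((\<lambda>W. EE_opt U T l g N0 \<Gamma> c W) \<longlongrightarrow> EEstar) at_top"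
  proof (rule tendsto_sandwich[OF _ _ lim tendsto_const])
    show "\<forall>\<^sub>F W in at_top. EE U T l g N0 \<Gamma> c (un W) \<le> EE_opt U T l g N0 \<Gamma> c W"
      using eventually_gt_at_top[of 0] by eventually_elim (rule low)
    show "\<forall>\<^sub>F W in at_top. EE_opt U T l g N0 \<Gamma> c W \<le> EEstar"
      using eventually_gt_at_top[of 0] by eventually_elim (rule up)
  qed
  thus ?thesis using up by blast
qed

end
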